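(* Let $H$ be a $d$-regular graph on $h$ vertices and let $G$ be any $n$-lift of $H$. For any induced subgraph $G'$ of $G$ with $|V(G')|\le n-h\sqrt{n}$, we have $\lambda^*(G)\ge \lambda(G')-7/2$.
   Context: Let $H$ be a graph with vertex set $[h]$. An $n$-lift $G$ of $H$ has vertex set $\{(i,j): i\in[h], j\in[n]\}$ with fibres $V_i=\{(i,j):j\in[n]\}$; for each edge $ii'$ of $H$ there is a perfect matching between $V_i$ and $V_{i'}$, and these are the only edges. Let $M$ be the adjacency matrix of $G$. The eigenvalues of $M$ on the ($M$-invariant) subspace of vectors balanced on every fibre ($\sum_{v\in V_i}x_v=0$ for all $i$) are the new eigenvalues; $\lambda^*(G)$ is the largest absolute value of a new eigenvalue. $\lambda(F)$ is the largest adjacency eigenvalue of a graph $F$. *)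

theory Defs
  imports Complex_Main
begin

(* Base graph H on vertex set {0..<h} (i.e. [h], 0-based), given by an edge relation. *)
definition simple_graph_on :: "nat \<Rightarrow> (nat \<Rightarrow> nat \<Rightarrow> bool) \<Rightarrow> bool" where
  "simple_graph_on h H \<longleftrightarrow>
     (\<forall>i i'. H i i' \<longrightarrow> i < h \<and> i' < h \<and> H i' i \<and> i \<noteq> i')"

definition regular_graph :: "nat \<Rightarrow> (nat \<Rightarrow> nat \<Rightarrow> bool) \<Rightarrow> nat \<Rightarrow> bool" where
  "regular_graph h H d \<longleftrightarrow> simple_graph_on h H \<and> (\<forall>i<h. card {i'. H i i'} = d)"

(* vertex set of an n-lift: pairs (i,j), i<h, j<n; fibre V_i = {(i,j). j<n} *)
definition lift_vertices :: "nat \<Rightarrow> nat \<Rightarrow> (nat \<times> nat) set" where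
  "lift_vertices h n = {0..<h} \<times> {0..<n}"

(* G is an n-lift of H: G is a symmetric edge relation on the lift vertices, every edge
   lies between fibres V_i, V_i' with ii' an edge of H, and for each edge ii' of H the
   edges between V_i and V_i' form a perfect matching. *)
definition is_lift :: "nat \<Rightarrow> nat \<Rightarrow> (nat \<Rightarrow> nat \<Rightarrow> bool) \<Rightarrow> (nat \<times> nat \<Rightarrow> nat \<times> nat \<Rightarrow> bool) \<Rightarrow> bool" where
  "is_lift h n H G \<longleftrightarrow>
     (\<forall>u v. G u v \<longrightarrow> G v u \<and> u \<in> lift_vertices h n \<and> v \<in> lift_vertices h n \<and> H (fst u) (fst v)) \<and>
     (\<forall>i i'. H i i' \<longrightarrow> (\<forall>j<n. \<exists>!j'. j' < n \<and> G (i, j) (i', j')))"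

definition adj_apply :: "'a set \<Rightarrow> ('a \<Rightarrow> 'a \<Rightarrow> bool) \<Rightarrow> ('a \<Rightarrow> real) \<Rightarrow> 'a \<Rightarrow> real" where
  "adj_apply V E x v = (\<Sum>w\<in>{w\<in>V. E v w}. x w)"

definition adj_eigenvalue :: "'a set \<Rightarrow> ('a \<Rightarrow> 'a \<Rightarrow> bool) \<Rightarrow> real \<Rightarrow> bool" where
  "adj_eigenvalue V E \<mu> \<longleftrightarrow>
     (\<exists>x. (\<exists>v\<in>V. x v \<noteq> 0) \<and> (\<forall>v\<in>V. adj_apply V E x v = \<mu> * x v))"

definition lambda_max :: "'a set \<Rightarrow> ('a \<Rightarrow> 'a \<Rightarrow> bool) \<Rightarrow> real" where
  "lambda_max V E = Max {\<mu>. adj_eigenvalue V E \<mu>}"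

(* mu is a new eigenvalue of the lift G: eigenvalue of the adjacency matrix on the
   (invariant) subspace of vectors balanced on every fibre *)
definition new_eigenvalue :: "nat \<Rightarrow> nat \<Rightarrow> (nat \<times> nat \<Rightarrow> nat \<times> nat \<Rightarrow> bool) \<Rightarrow> real \<Rightarrow> bool" where
  "new_eigenvalue h n G \<mu> \<longleftrightarrow>
     (\<exists>x. (\<exists>v\<in>lift_vertices h n. x v \<noteq> 0) \<and>
          (\<forall>i<h. (\<Sum>j<n. x (i, j)) = 0) \<and>
          (\<forall>v\<in>lift_vertices h n. adj_apply (lift_vertices h n) G x v = \<mu> * x v))"

definition lambda_star :: "nat \<Rightarrow> nat \<Rightarrow> (nat \<times> nat \<Rightarrow> nat \<times> nat \<Rightarrow> bool) \<Rightarrow> real" where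
  "lambda_star h n G = Max {\<bar>\<mu>\<bar> | \<mu>. new_eigenvalue h n G \<mu>}"

end

theory Submission imports Defs "HOL-Analysis.Function_Topology" "Jordan_Normal_Form.Char_Poly" "HOL-Analysis.Convex" begin

lemma adj_apply_if: "finite V \<Longrightarrow> adj_apply V E x v = (\<Sum>w\<in>V. if E v w then x w else 0)"
  unfolding adj_apply_def by (simp add: sum.inter_filter)

lemma eig_finite:
  fixes V :: "'a set" and E :: "'a \<Rightarrow> 'a \<Rightarrow> bool"
  assumes fin: "finite V"
  shows "finite {\<mu>. adj_eigenvalue V E \<mu>}"
proof -
  define k where "k = card V"
  obtain f where f: "bij_betw f {0..<k} V" using ex_bij_betw_nat_finite[OF fin] k_def by blast
  define A :: "real mat" where "A = mat k k (\<lambda>(i,j). if E (f i) (f j) then 1 else 0)"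
  have A: "A \<in> carrier_mat k k" by (simp add: A_def)
  have "{\<mu>. adj_eigenvalue V E \<mu>} \<subseteq> {\<mu>. poly (char_poly A) \<mu> = 0}"
  proof
    fix \<mu> assume "\<mu> \<in> {\<mu>. adj_eigenvalue V E \<mu>}"
    then obtain x where x0: "\<exists>v\<in>V. x v \<noteq> 0" and xe: "\<forall>v\<in>V. adj_apply V E x v = \<mu> * x v"
      by (auto simp: adj_eigenvalue_def)
    define v where "v = vec k (\<lambda>i. x (f i))"
    have "eigenvector A v \<mu>"
      unfolding eigenvector_def
    proof (intro conjI)
      show "v \<in> carrier_vec (dim_row A)" using A by (simp add: v_def)
      show "v \<noteq> 0\<^sub>v (dim_row A)"
      proof
        assume h: "v = 0\<^sub>v (dim_row A)"
        from x0 obtain w where w: "w \<in> V" "x w \<noteq> 0" by blast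
        then obtain i where i: "i < k" "f i = w" using f unfolding bij_betw_def by auto
        have "vec_index v i = x w" using i by (simp add: v_def)
        moreover have "vec_index v i = 0" using h i A by simp
        ultimately show False using w by simp
      qed
      show "A *\<^sub>v v = \<mu> \<cdot>\<^sub>v v"
      proof (rule eq_vecI)
        show "dim_vec (A *\<^sub>v v) = dim_vec (\<mu> \<cdot>\<^sub>v v)" using A by (simp add: v_def)
        fix i assume "i < dim_vec (\<mu> \<cdot>\<^sub>v v)"
        hence i: "i < k" by (simp add: v_def)
        have "vec_index (A *\<^sub>v v) i = (\<Sum>j\<in>{0..<k}. (if E (f i) (f j) then 1 else 0) * x (f j))"
          using i A by (simp add: A_def v_def scalar_prod_def)
        also have "\<dots> = (\<Sum>j\<in>{0..<k}. (\<lambda>w. if E (f i) w then x w else 0) (f j))"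
          by (rule sum.cong) auto
        also have "\<dots> = (\<Sum>w\<in>V. if E (f i) w then x w else 0)"
          by (rule sum.reindex_bij_betw[OF f])
        also have "\<dots> = adj_apply V E x (f i)" using fin by (simp add: adj_apply_if)
        also have "\<dots> = \<mu> * x (f i)" using xe f i unfolding bij_betw_def by auto
        finally show "vec_index (A *\<^sub>v v) i = vec_index (\<mu> \<cdot>\<^sub>v v) i" using i by (simp add: v_def)
      qed
    qed
    then have "eigenvalue A \<mu>" by (auto simp: eigenvalue_def)
    thus "\<mu> \<in> {\<mu>. poly (char_poly A) \<mu> = 0}" using eigenvalue_root_char_poly[OF A] by simp
  qed
  moreover have "char_poly A \<noteq> 0" using degree_monic_char_poly[OF A] by auto
  ultimately show ?thesis using poly_roots_finite finite_subset by blast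
qed

definition qf :: "'a set \<Rightarrow> ('a \<Rightarrow> 'a \<Rightarrow> bool) \<Rightarrow> ('a \<Rightarrow> real) \<Rightarrow> real" where
  "qf V E z = (\<Sum>v\<in>V. z v * adj_apply V E z v)"
definition bil :: "'a set \<Rightarrow> ('a \<Rightarrow> 'a \<Rightarrow> bool) \<Rightarrow> ('a \<Rightarrow> real) \<Rightarrow> ('a \<Rightarrow> real) \<Rightarrow> real" where
  "bil V E a b = (\<Sum>v\<in>V. a v * adj_apply V E b v)"
definition nrm :: "'a set \<Rightarrow> ('a \<Rightarrow> real) \<Rightarrow> real" where
  "nrm V z = (\<Sum>v\<in>V. (z v)^2)"
definition ip :: "'a set \<Rightarrow> ('a \<Rightarrow> real) \<Rightarrow> ('a \<Rightarrow> real) \<Rightarrow> real" where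
  "ip V a b = (\<Sum>v\<in>V. a v * b v)"

lemma adj_lin: "adj_apply V E (\<lambda>v. a v + t * b v) w = adj_apply V E a w + t * adj_apply V E b w"
  unfolding adj_apply_def by (simp add: sum.distrib sum_distrib_left)

lemma adj_cong: "(\<And>v. v \<in> V \<Longrightarrow> a v = b v) \<Longrightarrow> adj_apply V E a w = adj_apply V E b w"
  unfolding adj_apply_def by (rule sum.cong) auto

lemma bil_sym:
  assumes fin: "finite V" and sym: "\<And>u v. u \<in> V \<Longrightarrow> v \<in> V \<Longrightarrow> E u v \<Longrightarrow> E v u"
  shows "bil V E a b = bil V E b a"
proof -
  have "bil V E a b = (\<Sum>v\<in>V. \<Sum>w\<in>V. if E v w then a v * b w else 0)"
    unfolding bil_def using fin by (simp add: adj_apply_if sum_distrib_left if_distrib cong: if_cong)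
  also have "\<dots> = (\<Sum>w\<in>V. \<Sum>v\<in>V. if E v w then a v * b w else 0)" by (rule sum.swap)
  also have "\<dots> = (\<Sum>w\<in>V. \<Sum>v\<in>V. if E w v then b w * a v else 0)"
    by (rule sum.cong[OF refl], rule sum.cong[OF refl]) (auto dest: sym)
  also have "\<dots> = bil V E b a"
    unfolding bil_def using fin by (simp add: adj_apply_if sum_distrib_left if_distrib cong: if_cong)
  finally show ?thesis .
qed

lemma qf_expand:
  assumes fin: "finite V" and sym: "\<And>u v. u \<in> V \<Longrightarrow> v \<in> V \<Longrightarrow> E u v \<Longrightarrow> E v u"
  shows "qf V E (\<lambda>v. a v + t * b v) = qf V E a + 2 * t * bil V E b a + t^2 * qf V E b"
proof -
  have "qf V E (\<lambda>v. a v + t * b v) = bil V E a a + t * bil V E a b + t * bil V E b a + t^2 * bil V E b b"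
    unfolding qf_def bil_def adj_lin
    by (simp add: algebra_simps power2_eq_square sum.distrib sum_distrib_left)
  also have "bil V E a b = bil V E b a" by (rule bil_sym[OF fin sym])
  finally show ?thesis unfolding qf_def bil_def by simp
qed

lemma nrm_expand: "nrm V (\<lambda>v. a v + t * b v) = nrm V a + 2 * t * ip V a b + t^2 * nrm V b"
  unfolding nrm_def ip_def
  by (simp add: algebra_simps power2_eq_square sum.distrib sum_distrib_left)

lemma qf_scale: "qf V E (\<lambda>v. c * a v) = c^2 * qf V E a"
  unfolding qf_def adj_apply_def by (simp add: algebra_simps power2_eq_square sum_distrib_left)

lemma nrm_scale: "nrm V (\<lambda>v. c * a v) = c^2 * nrm V a"
  unfolding nrm_def by (simp add: algebra_simps power2_eq_square sum_distrib_left)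

lemma qf_cong: "(\<And>v. v \<in> V \<Longrightarrow> a v = b v) \<Longrightarrow> qf V E a = qf V E b"
  unfolding qf_def using adj_cong[of V a b E] by (metis (no_types, lifting) sum.cong)

lemma nrm_cong: "(\<And>v. v \<in> V \<Longrightarrow> a v = b v) \<Longrightarrow> nrm V a = nrm V b"
  unfolding nrm_def by (rule sum.cong) auto

lemma nrm_nonneg: "nrm V a \<ge> 0"
  unfolding nrm_def by (rule sum_nonneg) simp

lemma nrm_zero: "finite V \<Longrightarrow> nrm V a = 0 \<Longrightarrow> v \<in> V \<Longrightarrow> a v = 0"
  unfolding nrm_def by (simp add: sum_nonneg_eq_0_iff)

lemma nrm_pos: "finite V \<Longrightarrow> v \<in> V \<Longrightarrow> a v \<noteq> 0 \<Longrightarrow> nrm V a > 0"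
  using nrm_zero nrm_nonneg by (metis order_less_le)

lemma coord_le_nrm: "finite V \<Longrightarrow> v \<in> V \<Longrightarrow> (a v)^2 \<le> nrm V a"
  unfolding nrm_def by (rule member_le_sum) auto

lemma cont_nrm: "finite V \<Longrightarrow> continuous_map (product_topology (\<lambda>_. euclideanreal) V) euclideanreal (nrm V)"
  unfolding nrm_def by (intro continuous_intros) auto

lemma cont_qf: "finite V \<Longrightarrow> continuous_map (product_topology (\<lambda>_. euclideanreal) V) euclideanreal (qf V E)"
  unfolding qf_def adj_apply_def by (intro continuous_intros) auto

lemma variational:
  fixes V :: "'a set" and E :: "'a \<Rightarrow> 'a \<Rightarrow> bool" and W :: "('a \<Rightarrow> real) \<Rightarrow> bool"
  assumes fin: "finite V"
    and sym: "\<And>u v. u \<in> V \<Longrightarrow> v \<in> V \<Longrightarrow> E u v \<Longrightarrow> E v u"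
    and Wadd: "\<And>a b. W a \<Longrightarrow> W b \<Longrightarrow> W (\<lambda>v. a v + b v)"
    and Wscale: "\<And>a t. W a \<Longrightarrow> W (\<lambda>v. t * a v)"
    and Wcong: "\<And>a b. W a \<Longrightarrow> (\<forall>v\<in>V. a v = b v) \<Longrightarrow> W b"
    and Winv: "\<And>a. W a \<Longrightarrow> W (adj_apply V E a)"
    and Wcl: "closedin (product_topology (\<lambda>_. euclideanreal) V)
                {z \<in> topspace (product_topology (\<lambda>_. euclideanreal) V). W z}"
    and Wy: "W y" and y0: "\<exists>v\<in>V. y v \<noteq> 0"
  shows "\<exists>u \<mu>. W u \<and> (\<exists>v\<in>V. u v \<noteq> 0) \<and> (\<forall>v\<in>V. adj_apply V E u v = \<mu> * u v)
              \<and> qf V E y \<le> \<mu> * nrm V y"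
proof -
  define T where "T = product_topology (\<lambda>_::'a. euclideanreal) V"
  have topT: "topspace T = PiE V (\<lambda>_. UNIV)" by (simp add: T_def)
  define K where "K = {z \<in> topspace T. W z} \<inter> {z \<in> topspace T. nrm V z \<in> {1}}"
  have clK: "closedin T K" unfolding K_def
    apply (rule closedin_Int)
    using Wcl apply (simp add: T_def)
    apply (rule closedin_continuous_map_preimage)
    using cont_nrm[OF fin] apply (simp add: T_def)
    by simp
  have Ksub: "K \<subseteq> PiE V (\<lambda>_. {-1..1})"
  proof
    fix z assume z: "z \<in> K"
    hence zt: "z \<in> PiE V (\<lambda>_. UNIV)" and n1: "nrm V z = 1" using topT by (auto simp: K_def)
    have "\<forall>v\<in>V. z v \<in> {-1..1}"
    proof
      fix v assume "v \<in> V"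
      hence "(z v)^2 \<le> 1" using coord_le_nrm[OF fin] n1 by metis
      thus "z v \<in> {-1..1}" using abs_square_le_1 by (auto simp: abs_le_iff)
    qed
    thus "z \<in> PiE V (\<lambda>_. {-1..1})" using zt by (auto simp: PiE_def)
  qed
  have cpt0: "compactin T (PiE V (\<lambda>_. {-1..1}))" unfolding T_def
    by (subst compactin_PiE) simp
  have cptK: "compactin T K" by (rule closed_compactin[OF cpt0 Ksub clK])
  have normalize: "\<exists>w'\<in>K. qf V E w' = qf V E w / nrm V w" if Ww: "W w" and pos: "nrm V w > 0" for w
  proof -
    define c where "c = 1 / sqrt (nrm V w)"
    define w' where "w' = restrict (\<lambda>v. c * w v) V"
    have eq: "\<forall>v\<in>V. (\<lambda>v. c * w v) v = w' v" by (simp add: w'_def)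
    have "W w'" using Wcong[OF Wscale[OF Ww] eq] .
    moreover have "w' \<in> topspace T" unfolding topT w'_def by auto
    moreover have "nrm V w' = 1"
    proof -
      have "nrm V w' = nrm V (\<lambda>v. c * w v)" by (rule nrm_cong) (simp add: w'_def)
      also have "\<dots> = c^2 * nrm V w" by (rule nrm_scale)
      also have "\<dots> = 1" using pos by (simp add: c_def power_divide)
      finally show ?thesis .
    qed
    moreover have "qf V E w' = qf V E w / nrm V w"
    proof -
      have "qf V E w' = qf V E (\<lambda>v. c * w v)" by (rule qf_cong) (simp add: w'_def)
      also have "\<dots> = c^2 * qf V E w" by (rule qf_scale)
      also have "\<dots> = qf V E w / nrm V w" using pos by (simp add: c_def power_divide)
      finally show ?thesis .
    qed
    ultimately show ?thesis unfolding K_def by blast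
  qed
  have ypos: "nrm V y > 0" using y0 nrm_pos[OF fin] by blast
  have Kne: "K \<noteq> {}" using normalize[OF Wy ypos] by blast
  have "compact (qf V E ` K)"
    using image_compactin[OF cptK, of euclideanreal "qf V E"] cont_qf[OF fin] by (simp add: T_def)
  then obtain L where L: "L \<in> qf V E ` K" and Lmax: "\<forall>t\<in>qf V E ` K. t \<le> L"
    using compact_attains_sup Kne by (metis image_is_empty)
  then obtain u where uK: "u \<in> K" and Lu: "L = qf V E u" by blast
  have Wu: "W u" and nu: "nrm V u = 1" using uK by (auto simp: K_def)
  have claim1: "qf V E w \<le> L * nrm V w" if Ww: "W w" for w
  proof (cases "nrm V w > 0")
    case True
    then obtain w' where "w' \<in> K" "qf V E w' = qf V E w / nrm V w" using normalize[OF Ww] by blast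
    hence "qf V E w / nrm V w \<le> L" using Lmax by force
    thus ?thesis using True by (simp add: divide_le_eq mult.commute)
  next
    case False
    hence n0: "nrm V w = 0" using nrm_nonneg[of V w] by linarith
    have "qf V E w = qf V E (\<lambda>_. 0)" by (rule qf_cong) (use nrm_zero[OF fin n0] in auto)
    also have "\<dots> = 0" by (simp add: qf_def)
    finally show ?thesis using n0 by simp
  qed
  define z where "z = (\<lambda>v. adj_apply V E u v + (-L) * u v)"
  have Wz: "W z" unfolding z_def by (rule Wadd[OF Winv[OF Wu] Wscale[OF Wu]])
  have ipuz: "ip V u z = 0"
  proof -
    have "ip V u z = qf V E u - L * nrm V u"
      unfolding ip_def qf_def nrm_def z_def
      by (simp add: algebra_simps power2_eq_square sum.distrib sum_distrib_left sum_subtractf)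
    thus ?thesis using nu Lu by simp
  qed
  have bzu: "bil V E z u = nrm V z"
  proof -
    have "bil V E z u = (\<Sum>v\<in>V. z v * (z v + L * u v))"
      unfolding bil_def by (rule sum.cong) (auto simp: z_def)
    also have "\<dots> = nrm V z + L * ip V z u"
      unfolding nrm_def ip_def by (simp add: algebra_simps power2_eq_square sum.distrib sum_distrib_left)
    also have "ip V z u = ip V u z" unfolding ip_def by (simp add: mult.commute)
    finally show ?thesis using ipuz by simp
  qed
  have ineq: "2 * t * nrm V z \<le> t^2 * (L * nrm V z - qf V E z)" for t
  proof -
    have "W (\<lambda>v. u v + t * z v)" by (rule Wadd[OF Wu Wscale[OF Wz]])
    from claim1[OF this] have "qf V E (\<lambda>v. u v + t * z v) \<le> L * nrm V (\<lambda>v. u v + t * z v)" .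
    moreover have "qf V E (\<lambda>v. u v + t * z v) = qf V E u + 2 * t * bil V E z u + t^2 * qf V E z"
      by (rule qf_expand[OF fin sym])
    ultimately have "L + 2 * t * nrm V z + t^2 * qf V E z \<le> L * (1 + t^2 * nrm V z)"
      unfolding nrm_expand bzu ipuz nu Lu[symmetric] by simp
    thus ?thesis by (simp add: algebra_simps)
  qed
  have nz0: "nrm V z = 0"
  proof (rule ccontr)
    assume "nrm V z \<noteq> 0"
    hence nzp: "nrm V z > 0" using nrm_nonneg[of V z] by linarith
    define c where "c = L * nrm V z - qf V E z"
    define t where "t = nrm V z / (\<bar>c\<bar> + 1)"
    have tp: "t > 0" using nzp by (simp add: t_def)
    have "2 * t * nrm V z \<le> t^2 * c" using ineq[of t] by (simp add: c_def)
    hence "2 * nrm V z \<le> t * c" using tp by (simp add: power2_eq_square)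
    also have "t * c \<le> t * \<bar>c\<bar>" using tp by (simp add: mult_left_mono)
    also have "t * \<bar>c\<bar> < nrm V z"
    proof -
      have "t * \<bar>c\<bar> = nrm V z * (\<bar>c\<bar> / (\<bar>c\<bar> + 1))" by (simp add: t_def)
      also have "\<dots> < nrm V z * 1" using nzp by (intro mult_strict_left_mono) auto
      finally show ?thesis by simp
    qed
    finally show False using nzp by simp
  qed
  have eig: "\<forall>v\<in>V. adj_apply V E u v = L * u v"
  proof
    fix v assume "v \<in> V"
    from nrm_zero[OF fin nz0 this] show "adj_apply V E u v = L * u v" by (simp add: z_def)
  qed
  have u0: "\<exists>v\<in>V. u v \<noteq> 0"
  proof (rule ccontr)
    assume "\<not> (\<exists>v\<in>V. u v \<noteq> 0)"
    hence "nrm V u = 0" unfolding nrm_def by simp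
    thus False using nu by simp
  qed
  show ?thesis using Wu u0 eig claim1[OF Wy] by blast
qed

lemma lift_sym: "is_lift h n H G \<Longrightarrow> G u v \<Longrightarrow> G v u"
  unfolding is_lift_def by blast

lemma fibre_sum: "(\<Sum>v\<in>lift_vertices h n. F v) = (\<Sum>i<h. \<Sum>j<n. F (i, j))"
  unfolding lift_vertices_def by (simp add: sum.cartesian_product atLeast0LessThan)

lemma finite_lift: "finite (lift_vertices h n)"
  unfolding lift_vertices_def by simp

lemma nbr_sum:
  assumes lift: "is_lift h n H G" and i: "i < h" and j: "j < n"
  shows "(\<Sum>w\<in>{w\<in>lift_vertices h n. G (i, j) w}. f (fst w)) = (\<Sum>i'\<in>{i'. H i i'}. f i')"
proof -
  define N where "N = {w\<in>lift_vertices h n. G (i, j) w}"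
  have L1: "\<And>u v. G u v \<Longrightarrow> G v u \<and> u \<in> lift_vertices h n \<and> v \<in> lift_vertices h n \<and> H (fst u) (fst v)"
    and L2: "\<And>i i'. H i i' \<Longrightarrow> (\<forall>j<n. \<exists>!j'. j' < n \<and> G (i, j) (i', j'))"
    using lift unfolding is_lift_def by blast+
  have inj: "inj_on fst N"
  proof
    fix w1 w2 assume w1: "w1 \<in> N" and w2: "w2 \<in> N" and eq: "fst w1 = fst w2"
    obtain i1 j1 where w1e: "w1 = (i1, j1)" by (cases w1)
    obtain i2 j2 where w2e: "w2 = (i2, j2)" by (cases w2)
    have g1: "G (i, j) (i1, j1)" and g2: "G (i, j) (i2, j2)" using w1 w2 w1e w2e by (auto simp: N_def)
    have j1: "j1 < n" and j2: "j2 < n" using w1 w2 w1e w2e by (auto simp: N_def lift_vertices_def)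
    have H: "H i i1" using L1[OF g1] by simp
    have i12: "i1 = i2" using eq w1e w2e by simp
    have "\<exists>!j'. j' < n \<and> G (i, j) (i1, j')" using L2[OF H] j by blast
    hence "j1 = j2" using g1 g2 j1 j2 i12 by blast
    thus "w1 = w2" using w1e w2e i12 by simp
  qed
  have img: "fst ` N = {i'. H i i'}"
  proof
    show "fst ` N \<subseteq> {i'. H i i'}" using L1 by (force simp: N_def)
    show "{i'. H i i'} \<subseteq> fst ` N"
    proof
      fix i' assume "i' \<in> {i'. H i i'}"
      then obtain j' where "j' < n" "G (i, j) (i', j')" using L2 j by blast
      hence "(i', j') \<in> N" using L1 by (auto simp: N_def)
      thus "i' \<in> fst ` N" by force
    qed
  qed
  have "(\<Sum>i'\<in>{i'. H i i'}. f i') = (\<Sum>i'\<in>fst ` N. f i')" using img by simp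
  also have "\<dots> = (\<Sum>w\<in>N. f (fst w))" using sum.reindex[OF inj] by simp
  finally show ?thesis by (simp add: N_def)
qed

lemma balanced_orth:
  fixes z :: "nat \<times> nat \<Rightarrow> real" and c :: "nat \<Rightarrow> real"
  assumes "\<forall>i<h. (\<Sum>j<n. z (i, j)) = 0"
  shows "(\<Sum>v\<in>lift_vertices h n. z v * c (fst v)) = 0"
proof -
  have "(\<Sum>v\<in>lift_vertices h n. z v * c (fst v)) = (\<Sum>i<h. c i * (\<Sum>j<n. z (i, j)))"
    unfolding fibre_sum by (simp add: sum_distrib_left mult_ac)
  also have "\<dots> = 0" using assms by simp
  finally show ?thesis .
qed

definition bal :: "nat \<Rightarrow> nat \<Rightarrow> (nat \<times> nat \<Rightarrow> real) \<Rightarrow> bool" where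
  "bal h n z \<longleftrightarrow> (\<forall>i<h. (\<Sum>j<n. z (i, j)) = 0)"

lemma adj_fibre_fun:
  assumes lift: "is_lift h n H G" and v: "v \<in> lift_vertices h n"
  shows "adj_apply (lift_vertices h n) G (\<lambda>w. f (fst w)) v = (\<Sum>i'\<in>{i'. H (fst v) i'}. f i')"
proof -
  obtain i j where vij: "v = (i, j)" by (cases v)
  have "i < h" "j < n" using v vij by (auto simp: lift_vertices_def)
  thus ?thesis unfolding adj_apply_def using nbr_sum[OF lift] vij by simp
qed

lemma bal_inv:
  assumes lift: "is_lift h n H G" and ba: "bal h n a"
  shows "bal h n (adj_apply (lift_vertices h n) G a)"
  unfolding bal_def
proof (intro allI impI)
  fix i assume i: "i < h"
  define e :: "nat \<times> nat \<Rightarrow> real" where "e = (\<lambda>v. if fst v = i then 1 else 0)"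
  define c :: "nat \<Rightarrow> real" where "c = (\<lambda>i0. \<Sum>i'\<in>{i'. H i0 i'}. (if i' = i then 1 else 0))"
  have symV: "\<And>u v. u \<in> lift_vertices h n \<Longrightarrow> v \<in> lift_vertices h n \<Longrightarrow> G u v \<Longrightarrow> G v u"
    using lift_sym[OF lift] by blast
  have "(\<Sum>j<n. adj_apply (lift_vertices h n) G a (i, j))
        = (\<Sum>v\<in>lift_vertices h n. e v * adj_apply (lift_vertices h n) G a v)"
  proof -
    have "(\<Sum>v\<in>lift_vertices h n. e v * adj_apply (lift_vertices h n) G a v)
        = (\<Sum>i'<h. if i' = i then (\<Sum>j<n. adj_apply (lift_vertices h n) G a (i, j)) else 0)"
      unfolding fibre_sum e_def by (rule sum.cong[OF refl]) auto
    also have "\<dots> = (\<Sum>j<n. adj_apply (lift_vertices h n) G a (i, j))"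
      using i by (simp add: sum.delta)
    finally show ?thesis by simp
  qed
  also have "\<dots> = bil (lift_vertices h n) G e a" by (simp add: bil_def)
  also have "\<dots> = bil (lift_vertices h n) G a e" by (rule bil_sym[OF finite_lift symV])
  also have "\<dots> = (\<Sum>v\<in>lift_vertices h n. a v * c (fst v))"
    unfolding bil_def
  proof (rule sum.cong[OF refl])
    fix v assume v: "v \<in> lift_vertices h n"
    have "adj_apply (lift_vertices h n) G e v
          = adj_apply (lift_vertices h n) G (\<lambda>w. (\<lambda>i'. if i' = i then 1 else 0) (fst w)) v"
      by (simp add: e_def)
    also have "\<dots> = c (fst v)" using adj_fibre_fun[OF lift v, of "\<lambda>i'. if i' = i then 1 else 0"] by (simp add: c_def)
    finally show "a v * adj_apply (lift_vertices h n) G e v = a v * c (fst v)" by simp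
  qed
  also have "\<dots> = 0" by (rule balanced_orth) (use ba in \<open>simp add: bal_def\<close>)
  finally show "(\<Sum>j<n. adj_apply (lift_vertices h n) G a (i, j)) = 0" .
qed

lemma bal_closed:
  "closedin (product_topology (\<lambda>_. euclideanreal) (lift_vertices h n))
     {z \<in> topspace (product_topology (\<lambda>_. euclideanreal) (lift_vertices h n)). bal h n z}"
proof -
  define F where "F = (\<lambda>z::nat\<times>nat\<Rightarrow>real. \<Sum>i<h. (\<Sum>j<n. z (i, j))^2)"
  have cont: "continuous_map (product_topology (\<lambda>_. euclideanreal) (lift_vertices h n)) euclideanreal F"
    unfolding F_def by (intro continuous_intros) (auto simp: lift_vertices_def)
  have eq: "bal h n z \<longleftrightarrow> F z \<in> {0}" for z
    unfolding bal_def F_def by (simp add: sum_nonneg_eq_0_iff Ball_def)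
  show ?thesis unfolding eq by (rule closedin_continuous_map_preimage[OF cont]) simp
qed

theorem proposition1p3:
  fixes h n d :: nat
    and H :: "nat \<Rightarrow> nat \<Rightarrow> bool"
    and G :: "nat \<times> nat \<Rightarrow> nat \<times> nat \<Rightarrow> bool"
    and S :: "(nat \<times> nat) set"
  assumes "regular_graph h H d"
    and "is_lift h n H G"
    and "S \<subseteq> lift_vertices h n"
    and "S \<noteq> {}"
    and "real (card S) \<le> real n - real h * sqrt (real n)"
  shows "lambda_star h n G \<ge> lambda_max S G - 7 / 2"
proof -
  note lift = assms(2)
  note SL = assms(3)
  define LV where "LV = lift_vertices h n"
  have simple: "simple_graph_on h H" using assms(1) by (simp add: regular_graph_def)
  have symG: "\<And>u v. G u v \<Longrightarrow> G v u" using lift_sym[OF lift] by blast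
  have finLV: "finite LV" unfolding LV_def by (rule finite_lift)
  have SL': "S \<subseteq> LV" using SL by (simp add: LV_def)
  have finS: "finite S" using finite_subset[OF SL' finLV] .
  obtain v0 where v0: "v0 \<in> S" using assms(4) by blast
  have hn: "h > 0" "n > 0" using SL v0 by (auto simp: lift_vertices_def)
  have cS: "real (card S) < real n"
  proof -
    have "real h * sqrt (real n) > 0" using hn by simp
    thus ?thesis using assms(5) by linarith
  qed
  have finES: "finite {\<mu>. adj_eigenvalue S G \<mu>}" by (rule eig_finite[OF finS])
  have neES: "{\<mu>. adj_eigenvalue S G \<mu>} \<noteq> {}"
  proof -
    have "\<exists>u \<mu>. True \<and> (\<exists>v\<in>S. u v \<noteq> 0) \<and> (\<forall>v\<in>S. adj_apply S G u v = \<mu> * u v)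
              \<and> qf S G (\<lambda>_. 1) \<le> \<mu> * nrm S (\<lambda>_. 1)"
    proof (rule variational[OF finS, of G "\<lambda>_. True" "\<lambda>_. 1"])
      show "closedin (product_topology (\<lambda>_. euclideanreal) S)
        {z \<in> topspace (product_topology (\<lambda>_. euclideanreal) S). True}"
        using closedin_topspace[of "product_topology (\<lambda>_. euclideanreal) S"] by simp
      show "\<exists>v\<in>S. (1::real) \<noteq> 0" using v0 by (metis one_neq_zero)
    qed (use symG in auto)
    thus ?thesis unfolding adj_eigenvalue_def by blast
  qed
  define \<mu>0 where "\<mu>0 = lambda_max S G"
  have "adj_eigenvalue S G \<mu>0" unfolding \<mu>0_def lambda_max_def using Max_in[OF finES neES] by simp
  then obtain x where x0: "\<exists>v\<in>S. x v \<noteq> 0" and xe: "\<forall>v\<in>S. adj_apply S G x v = \<mu>0 * x v"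
    unfolding adj_eigenvalue_def by blast
  define x' where "x' = (\<lambda>v. if v \<in> S then x v else 0)"
  define X where "X = nrm S x"
  have Xpos: "X > 0" unfolding X_def using x0 nrm_pos[OF finS] by blast
  define s where "s = (\<lambda>i. \<Sum>j<n. x' (i, j))"
  define P where "P = (\<lambda>v::nat\<times>nat. s (fst v) / real n)"
  define y where "y = (\<lambda>v. x' v + (-1) * P v)"
  define g where "g = (\<lambda>i. \<Sum>i'\<in>{i'. H i i'}. s i' / real n)"
  define p where "p = (\<Sum>i<h. (s i)^2 / real n)"
  define q where "q = (\<Sum>i<h. s i * g i)"
  define Tot where "Tot = (\<Sum>i<h. \<bar>s i\<bar>)"
  have symV: "\<And>u v. u \<in> LV \<Longrightarrow> v \<in> LV \<Longrightarrow> G u v \<Longrightarrow> G v u" using symG by blast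
  have Ax': "adj_apply LV G x' v = \<mu>0 * x v" if v: "v \<in> S" for v
  proof -
    have "adj_apply LV G x' v = (\<Sum>w\<in>LV. if G v w then x' w else 0)" by (rule adj_apply_if[OF finLV])
    also have "\<dots> = (\<Sum>w\<in>S. if G v w then x w else 0)"
      by (rule sum.mono_neutral_cong_right[OF finLV SL']) (auto simp: x'_def)
    also have "\<dots> = adj_apply S G x v" by (rule adj_apply_if[OF finS, symmetric])
    finally show ?thesis using xe v by simp
  qed
  have qfx: "qf LV G x' = \<mu>0 * X"
  proof -
    have "qf LV G x' = (\<Sum>v\<in>S. x v * (\<mu>0 * x v))"
      unfolding qf_def
    proof (rule sum.mono_neutral_cong_right[OF finLV SL'])
      show "\<forall>i\<in>LV - S. x' i * adj_apply LV G x' i = 0" by (simp add: x'_def)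
      fix v assume v: "v \<in> S"
      have "x' v = x v" using v by (simp add: x'_def)
      thus "x' v * adj_apply LV G x' v = x v * (\<mu>0 * x v)" using Ax'[OF v] by simp
    qed
    thus ?thesis by (simp add: X_def nrm_def sum_distrib_left power2_eq_square mult_ac)
  qed
  have nx: "nrm LV x' = X"
    unfolding nrm_def X_def by (rule sum.mono_neutral_cong_right[OF finLV SL']) (auto simp: x'_def)
  have AP: "adj_apply LV G P v = g (fst v)" if v: "v \<in> LV" for v
    using adj_fibre_fun[OF lift, of v "\<lambda>i. s i / real n"] v by (simp add: LV_def P_def g_def)
  have bal_y: "bal h n y"
    unfolding bal_def
  proof (intro allI impI)
    fix i assume "i < h"
    have "(\<Sum>j<n. y (i, j)) = s i - real n * (s i / real n)"
      by (simp add: y_def P_def s_def sum_subtractf)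
    also have "\<dots> = 0" using hn by simp
    finally show "(\<Sum>j<n. y (i, j)) = 0" .
  qed
  have orth_y: "(\<Sum>v\<in>LV. y v * c (fst v)) = 0" for c
    unfolding LV_def by (rule balanced_orth) (use bal_y in \<open>simp add: bal_def\<close>)
  have bPx: "bil LV G P x' = q"
  proof -
    have "bil LV G P x' = bil LV G x' P" by (rule bil_sym[OF finLV symV])
    also have "\<dots> = (\<Sum>v\<in>LV. x' v * g (fst v))" unfolding bil_def by (rule sum.cong) (auto simp: AP)
    also have "\<dots> = q" unfolding LV_def fibre_sum q_def s_def
      by (simp add: sum_distrib_right sum_distrib_left mult_ac)
    finally show ?thesis .
  qed
  have qfy: "qf LV G y = \<mu>0 * X - q"
  proof -
    have "qf LV G y = (\<Sum>v\<in>LV. y v * (adj_apply LV G x' v - g (fst v)))"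
      unfolding qf_def
    proof (rule sum.cong[OF refl])
      fix v assume v: "v \<in> LV"
      have "adj_apply LV G y v = adj_apply LV G x' v + (-1) * adj_apply LV G P v"
        unfolding y_def by (rule adj_lin)
      thus "y v * adj_apply LV G y v = y v * (adj_apply LV G x' v - g (fst v))" using AP[OF v] by simp
    qed
    also have "\<dots> = (\<Sum>v\<in>LV. y v * adj_apply LV G x' v) - (\<Sum>v\<in>LV. y v * g (fst v))"
      by (simp add: right_diff_distrib sum_subtractf)
    also have "(\<Sum>v\<in>LV. y v * g (fst v)) = 0" by (rule orth_y)
    also have "(\<Sum>v\<in>LV. y v * adj_apply LV G x' v) = qf LV G x' - bil LV G P x'"
      unfolding qf_def bil_def y_def by (simp add: algebra_simps sum_subtractf)
    finally show ?thesis using qfx bPx by simp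
  qed
  have nrmy: "nrm LV y = X - p"
  proof -
    have ipP: "ip LV x' P = p"
      unfolding ip_def LV_def fibre_sum p_def P_def
    proof (rule sum.cong[OF refl])
      fix i assume "i \<in> {..<h}"
      have "(\<Sum>j<n. x' (i, j) * (s (fst (i, j)) / real n)) = (\<Sum>j<n. x' (i, j)) * (s i / real n)"
        by (simp only: fst_conv sum_distrib_right)
      also have "\<dots> = (s i)^2 / real n" by (simp add: s_def power2_eq_square)
      finally show "(\<Sum>j<n. x' (i, j) * (s (fst (i, j)) / real n)) = (s i)^2 / real n" .
    qed
    have nP: "nrm LV P = p"
      unfolding nrm_def LV_def fibre_sum p_def P_def using hn
      by (simp add: power2_eq_square)
    have "nrm LV y = nrm LV x' + 2 * (-1) * ip LV x' P + (-1)^2 * nrm LV P"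
      unfolding y_def by (rule nrm_expand)
    thus ?thesis using nx ipP nP by simp
  qed
  have Tot_nn: "Tot \<ge> 0" unfolding Tot_def by (rule sum_nonneg) simp
  have s_le: "\<bar>s i\<bar> \<le> Tot" if "i < h" for i
    unfolding Tot_def by (rule member_le_sum) (use that in auto)
  have Tot_le: "Tot \<le> (\<Sum>v\<in>S. \<bar>x v\<bar>)"
  proof -
    have "Tot \<le> (\<Sum>i<h. \<Sum>j<n. \<bar>x' (i, j)\<bar>)" unfolding Tot_def s_def
      by (rule sum_mono) (rule sum_abs)
    also have "\<dots> = (\<Sum>v\<in>LV. \<bar>x' v\<bar>)" unfolding LV_def fibre_sum ..
    also have "\<dots> = (\<Sum>v\<in>S. \<bar>x v\<bar>)"
      by (rule sum.mono_neutral_cong_right[OF finLV SL']) (auto simp: x'_def)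
    finally show ?thesis .
  qed
  have CS: "Tot^2 \<le> X * real (card S)"
  proof -
    have "Tot^2 \<le> (\<Sum>v\<in>S. \<bar>x v\<bar>)^2" using Tot_le Tot_nn by (rule power_mono)
    also have "\<dots> \<le> (\<Sum>v\<in>S. (\<bar>x v\<bar>)^2) * real (card S)" by (rule sum_squared_le_sum_of_squares)
    also have "\<dots> = X * real (card S)" by (simp add: X_def nrm_def)
    finally show ?thesis .
  qed
  have TX: "Tot^2 / real n < X"
  proof -
    have "Tot^2 \<le> X * real (card S)" by (rule CS)
    also have "\<dots> < X * real n" using Xpos cS by simp
    finally show ?thesis using hn by (simp add: divide_less_eq)
  qed
  have p_nn: "p \<ge> 0" unfolding p_def by (rule sum_nonneg) simp
  have p_le: "p \<le> Tot^2 / real n"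
  proof -
    have "p \<le> (\<Sum>i<h. \<bar>s i\<bar> * Tot / real n)" unfolding p_def
    proof (rule sum_mono)
      fix i assume "i \<in> {..<h}"
      hence "\<bar>s i\<bar> * \<bar>s i\<bar> \<le> \<bar>s i\<bar> * Tot" using s_le[of i] by (intro mult_left_mono) auto
      moreover have "(s i)^2 = \<bar>s i\<bar> * \<bar>s i\<bar>" by (simp add: power2_eq_square)
      ultimately show "(s i)^2 / real n \<le> \<bar>s i\<bar> * Tot / real n"
        by (simp add: divide_right_mono)
    qed
    also have "\<dots> = Tot^2 / real n" unfolding Tot_def
      by (simp add: sum_divide_distrib[symmetric] sum_distrib_right[symmetric] power2_eq_square)
    finally show ?thesis .
  qed
  have g_le: "\<bar>g i\<bar> \<le> Tot / real n" for i
  proof -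
    have sub: "{i'. H i i'} \<subseteq> {..<h}" using simple by (auto simp: simple_graph_on_def)
    have "\<bar>g i\<bar> \<le> (\<Sum>i'\<in>{i'. H i i'}. \<bar>s i' / real n\<bar>)" unfolding g_def by (rule sum_abs)
    also have "\<dots> \<le> (\<Sum>i'<h. \<bar>s i' / real n\<bar>)"
      by (rule sum_mono2[OF _ sub]) auto
    also have "\<dots> = Tot / real n" unfolding Tot_def by (simp add: sum_divide_distrib)
    finally show ?thesis .
  qed
  have q_le: "q \<le> Tot^2 / real n"
  proof -
    have "q \<le> (\<Sum>i<h. \<bar>s i\<bar> * (Tot / real n))" unfolding q_def
    proof (rule sum_mono)
      fix i assume "i \<in> {..<h}"
      have "s i * g i \<le> \<bar>s i\<bar> * \<bar>g i\<bar>" by (simp add: abs_mult[symmetric])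
      also have "\<dots> \<le> \<bar>s i\<bar> * (Tot / real n)" using g_le[of i] by (intro mult_left_mono) auto
      finally show "s i * g i \<le> \<bar>s i\<bar> * (Tot / real n)" .
    qed
    also have "\<dots> = (\<Sum>i<h. \<bar>s i\<bar>) * (Tot / real n)" by (rule sum_distrib_right[symmetric])
    also have "\<dots> = Tot^2 / real n" unfolding Tot_def[symmetric] by (simp add: power2_eq_square)
    finally show ?thesis .
  qed
  have nypos: "nrm LV y > 0" using nrmy p_le TX by linarith
  have y0: "\<exists>v\<in>LV. y v \<noteq> 0"
  proof (rule ccontr)
    assume "\<not> (\<exists>v\<in>LV. y v \<noteq> 0)"
    hence "nrm LV y = 0" unfolding nrm_def by simp
    thus False using nypos by simp
  qed
  have "\<exists>u \<mu>. bal h n u \<and> (\<exists>v\<in>LV. u v \<noteq> 0) \<and> (\<forall>v\<in>LV. adj_apply LV G u v = \<mu> * u v)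
              \<and> qf LV G y \<le> \<mu> * nrm LV y"
  proof (rule variational[OF finLV symV])
    show "\<And>a b. bal h n a \<Longrightarrow> bal h n b \<Longrightarrow> bal h n (\<lambda>v. a v + b v)"
      unfolding bal_def by (simp add: sum.distrib)
    show "\<And>a t. bal h n a \<Longrightarrow> bal h n (\<lambda>v. t * a v)"
      unfolding bal_def by (simp add: sum_distrib_left[symmetric])
    show "\<And>a b. bal h n a \<Longrightarrow> \<forall>v\<in>LV. a v = b v \<Longrightarrow> bal h n b"
    proof -
      fix a b assume ba: "bal h n a" and eq: "\<forall>v\<in>LV. a v = b v"
      show "bal h n b" unfolding bal_def
      proof (intro allI impI)
        fix i assume i: "i < h"
        have "(\<Sum>j<n. b (i, j)) = (\<Sum>j<n. a (i, j))"
          by (rule sum.cong[OF refl]) (use eq i in \<open>auto simp: LV_def lift_vertices_def\<close>)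
        thus "(\<Sum>j<n. b (i, j)) = 0" using ba i by (simp add: bal_def)
      qed
    qed
    show "\<And>a. bal h n a \<Longrightarrow> bal h n (adj_apply LV G a)" unfolding LV_def by (rule bal_inv[OF lift])
    show "closedin (product_topology (\<lambda>_. euclideanreal) LV)
            {z \<in> topspace (product_topology (\<lambda>_. euclideanreal) LV). bal h n z}"
      unfolding LV_def by (rule bal_closed)
    show "bal h n y" by (rule bal_y)
    show "\<exists>v\<in>LV. y v \<noteq> 0" by (rule y0)
  qed
  then obtain u \<mu> where bu: "bal h n u" and u0: "\<exists>v\<in>LV. u v \<noteq> 0"
    and ue: "\<forall>v\<in>LV. adj_apply LV G u v = \<mu> * u v" and Ry: "qf LV G y \<le> \<mu> * nrm LV y" by blast
  have newe: "new_eigenvalue h n G \<mu>"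
    unfolding new_eigenvalue_def using bu u0 ue by (auto simp: bal_def LV_def)
  have ls: "\<bar>\<mu>\<bar> \<le> lambda_star h n G"
  proof -
    have eqset: "{\<bar>\<mu>\<bar> |\<mu>. new_eigenvalue h n G \<mu>} = abs ` {\<mu>. new_eigenvalue h n G \<mu>}" by auto
    have "{\<mu>. new_eigenvalue h n G \<mu>} \<subseteq> {\<mu>. adj_eigenvalue LV G \<mu>}"
      unfolding new_eigenvalue_def adj_eigenvalue_def LV_def by blast
    hence "finite {\<mu>. new_eigenvalue h n G \<mu>}" using eig_finite[OF finLV, of G] finite_subset by blast
    hence fin: "finite {\<bar>\<mu>\<bar> |\<mu>. new_eigenvalue h n G \<mu>}" unfolding eqset by simp
    show ?thesis unfolding lambda_star_def by (rule Max_ge[OF fin]) (use newe in blast)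
  qed
  have key: "\<mu>0 - 7 / 2 \<le> \<bar>\<mu>\<bar>"
  proof (cases "\<mu>0 \<le> 7 / 2")
    case True thus ?thesis by simp
  next
    case False
    have R: "\<mu>0 * X - q \<le> \<mu> * (X - p)" using Ry qfy nrmy by simp
    have Xp: "X - p > 0" using nypos nrmy by simp
    have qX: "q \<le> X" using q_le TX by linarith
    show ?thesis
    proof (rule ccontr)
      assume "\<not> ?thesis"
      hence lt: "\<mu> < \<mu>0 - 7 / 2" by simp
      have "\<mu> * (X - p) < (\<mu>0 - 7 / 2) * (X - p)" using mult_strict_right_mono[OF lt Xp] .
      moreover have "7 / 2 * p \<le> \<mu>0 * p" using False p_nn by (intro mult_right_mono) auto
      ultimately have "\<mu>0 * X - q < \<mu>0 * X - \<mu>0 * p - 7 / 2 * X + 7 / 2 * p"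
      proof -
        have e2: "(\<mu>0 - 7 / 2) * (X - p) = \<mu>0 * X - \<mu>0 * p - 7 / 2 * X + 7 / 2 * p"
          by (simp add: field_simps)
        show ?thesis using R e2 \<open>\<mu> * (X - p) < (\<mu>0 - 7 / 2) * (X - p)\<close> by linarith
      qed
      hence "q > 7 / 2 * X" using \<open>7 / 2 * p \<le> \<mu>0 * p\<close> by linarith
      thus False using qX Xpos by linarith
    qed
  qed
  show ?thesis using key ls \<mu>0_def by simp
qed

end
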